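(* Let $U$ be the Fourier/wavelets matrix described in the context, with $\Psi$ having $v\ge1$ vanishing moments. Let $R_1,R_2\in\mathbb{N}\setminus\{0\}$ with $R_2>R_1$, and let $M_1<M_2$ be such that $\{\varphi_j:M_1<j\le M_2\}\subseteq\Omega_{R_2,a}\setminus\Omega_{R_1,a}$. Then for any $\gamma\in(0,1)$, $$\|P_NUP^{M_1}_{M_2}\|\le\frac{\pi^2}{4}\|\theta_\Psi\|_{L^\infty}\cdot(2\pi\gamma)^v\cdot\sqrt{\frac{1-2^{2v(R_1-R_2)}}{1-2^{-2v}}}$$ whenever $N\le\gamma\,\omega^{-1}2^{R_1}$.
   Context: $\hat f(\xi)=\int f(x)e^{-ix\xi}dx$. $\Phi,\Psi$: scaling function and mother wavelet of an orthonormal basis of compactly supported wavelets with an MRA, $\mathrm{supp}\Phi=\mathrm{supp}\Psi=[0,a]$, $a\ge1$; $\Psi$ having $v$ vanishing moments means $\hat\Psi(z)=(-iz)^v\theta_\Psi(z)$ with $\theta_\Psi$ bounded. $\Phi_k=\Phi(\cdot-k)$, $\Psi_{j,k}=2^{j/2}\Psi(2^j\cdot-k)$; $\Omega_a=\{\Phi_k:|k|\le\lceil a\rceil-1\}\cup\{\Psi_{j,k}:j\in\mathbb{Z}_+,-\lceil a\rceil<k<2^j\lceil a\rceil\}$, ordered by increasing resolution (the $\Phi_k$ first, then $\Psi_{0,k}$, $\Psi_{1,k}$, …, increasing $k$ within a level), giving $(\varphi_j)_{j\in\mathbb{N}}$; $\Omega_{R,a}$ consists of the $\Phi_k$ and the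 $\Psi_{j,k}\in\Omega_a$ with $j<R$. $T_1=\lceil a\rceil-1$, $T_2=2\lceil a\rceil-1$; $\omega\in(0,1/(T_1+T_2))$, $\omega^{-1}\in\mathbb{N}$; $\psi_j(x)=\sqrt\omega e^{2\pi ij\omega x}\chi_{[-T_1/(\omega(T_1+T_2)),T_2/(\omega(T_1+T_2))]}(x)$, ordered $\tilde\psi_1=\psi_0,\tilde\psi_{2n}=\psi_n,\tilde\psi_{2n+1}=\psi_{-n}$; $U=(\langle\varphi_j,\tilde\psi_i\rangle)_{i,j\in\mathbb{N}}$. $P_N$ projects onto the first $N$ coordinates and $P^{a}_{b}$ onto $\mathrm{span}\{e_{a+1},\dots,e_b\}$. *)

theory Defs
  imports "HOL-Analysis.Analysis" "HOL-Probability.Essential_Supremum"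
begin

definition square_integrable :: "(real \<Rightarrow> complex) \<Rightarrow> bool" where
  "square_integrable f \<longleftrightarrow> f \<in> borel_measurable lborel \<and> integrable lborel (\<lambda>x. (cmod (f x))\<^sup>2)"

definition l2_inner :: "(real \<Rightarrow> complex) \<Rightarrow> (real \<Rightarrow> complex) \<Rightarrow> complex" where
  "l2_inner f g = (LINT x|lborel. f x * cnj (g x))"

definition fourier :: "(real \<Rightarrow> complex) \<Rightarrow> real \<Rightarrow> complex" where
  "fourier f \<xi> = (LINT x|lborel. f x * exp (- (\<i> * complex_of_real (x * \<xi>))))"

definition l2_orthonormal_basis :: "('i \<Rightarrow> (real \<Rightarrow> complex)) \<Rightarrow> bool" where
  "l2_orthonormal_basis e \<longleftrightarrow>
     (\<forall>i. square_integrable (e i)) \<and>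
     (\<forall>i j. l2_inner (e i) (e j) = (if i = j then 1 else 0)) \<and>
     (\<forall>f. square_integrable f \<and> (\<forall>i. l2_inner f (e i) = 0) \<longrightarrow> (AE x in lborel. f x = 0))"

definition fsupport :: "(real \<Rightarrow> complex) \<Rightarrow> real set" where
  "fsupport f = closure {x. f x \<noteq> 0}"

definition dil_trans :: "(real \<Rightarrow> complex) \<Rightarrow> nat \<Rightarrow> int \<Rightarrow> real \<Rightarrow> complex" where
  "dil_trans \<Psi> j k = (\<lambda>x. complex_of_real (2 powr (real j / 2)) * \<Psi> (2 ^ j * x - of_int k))"

definition transl :: "(real \<Rightarrow> complex) \<Rightarrow> int \<Rightarrow> real \<Rightarrow> complex" where
  "transl \<Phi> k = (\<lambda>x. \<Phi> (x - of_int k))"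

text \<open>Phi is the scaling function and Psi the mother wavelet of an orthonormal wavelet
  basis arising from a multiresolution analysis, both with support exactly [0,a].
  The MRA structure is expressed by the (finite, since compactly supported) two-scale relations
  Phi, Psi in V_1 = closed span of sqrt 2 Phi(2 . - k), together with the fact that
  {Phi_k : k in Z} union {Psi_{j,k} : j >= 0, k in Z} is an orthonormal basis of L2(R).\<close>
definition compact_MRA_wavelet :: "(real \<Rightarrow> complex) \<Rightarrow> (real \<Rightarrow> complex) \<Rightarrow> real \<Rightarrow> bool" where
  "compact_MRA_wavelet \<Phi> \<Psi> a \<longleftrightarrow>
     square_integrable \<Phi> \<and> square_integrable \<Psi> \<and>
     fsupport \<Phi> = {0..a} \<and> fsupport \<Psi> = {0..a} \<and>
     l2_orthonormal_basis (\<lambda>s::int + (nat \<times> int).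
        case s of Inl k \<Rightarrow> transl \<Phi> k | Inr (j, k) \<Rightarrow> dil_trans \<Psi> j k) \<and>
     (\<exists>h::int \<Rightarrow> complex. finite {k. h k \<noteq> 0} \<and>
        (AE x in lborel. \<Phi> x = (\<Sum>k\<in>{k. h k \<noteq> 0}. h k * complex_of_real (sqrt 2) * \<Phi> (2 * x - of_int k)))) \<and>
     (\<exists>g::int \<Rightarrow> complex. finite {k. g k \<noteq> 0} \<and>
        (AE x in lborel. \<Psi> x = (\<Sum>k\<in>{k. g k \<noteq> 0}. g k * complex_of_real (sqrt 2) * \<Phi> (2 * x - of_int k))))"

definition vanishing_moments :: "(real \<Rightarrow> complex) \<Rightarrow> nat \<Rightarrow> (real \<Rightarrow> complex) \<Rightarrow> bool" where
  "vanishing_moments \<Psi> v \<theta> \<longleftrightarrow>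
     (\<forall>z. fourier \<Psi> z = (- \<i> * complex_of_real z) ^ v * \<theta> z) \<and> (\<exists>B. \<forall>z. cmod (\<theta> z) \<le> B)"

definition Linf_norm :: "(real \<Rightarrow> complex) \<Rightarrow> ereal" where
  "Linf_norm \<theta> = esssup lborel (\<lambda>z. ereal (cmod (\<theta> z)))"

text \<open>c = ceiling a. Number of wavelets Psi_{j,k} in Omega_a at level j: k ranges over
  -c < k < 2^j c, i.e. 2^j c + c - 1 elements.\<close>
definition lvl_size :: "nat \<Rightarrow> nat \<Rightarrow> nat" where
  "lvl_size c j = 2 ^ j * c + c - 1"

text \<open>The i-th element (i = 1, 2, ...) of Omega_a in the stated order: first Phi_k for
  k = -(c-1), ..., c-1 (that is 2c-1 elements), then level 0, level 1, ... with increasing k.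
  Inl k stands for Phi_k, Inr (j,k) for Psi_{j,k}.\<close>
definition wav_index :: "nat \<Rightarrow> nat \<Rightarrow> int + (nat \<times> int)" where
  "wav_index c i =
     (if i \<le> 2 * c - 1 then Inl (int (i - 1) - int (c - 1))
      else (let r = i - 2 * c;
                j = (LEAST j. r < (\<Sum>l\<le>j. lvl_size c l))
            in Inr (j, int (r - (\<Sum>l<j. lvl_size c l)) - int (c - 1))))"

definition wav_fun :: "(real \<Rightarrow> complex) \<Rightarrow> (real \<Rightarrow> complex) \<Rightarrow> int + (nat \<times> int) \<Rightarrow> real \<Rightarrow> complex" where
  "wav_fun \<Phi> \<Psi> s = (case s of Inl k \<Rightarrow> transl \<Phi> k | Inr (j, k) \<Rightarrow> dil_trans \<Psi> j k)"

definition varphi :: "(real \<Rightarrow> complex) \<Rightarrow> (real \<Rightarrow> complex) \<Rightarrow> real \<Rightarrow> nat \<Rightarrow> real \<Rightarrow> complex" where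
  "varphi \<Phi> \<Psi> a i = wav_fun \<Phi> \<Psi> (wav_index (nat \<lceil>a\<rceil>) i)"

definition Omega_R :: "(real \<Rightarrow> complex) \<Rightarrow> (real \<Rightarrow> complex) \<Rightarrow> real \<Rightarrow> nat \<Rightarrow> (real \<Rightarrow> complex) set" where
  "Omega_R \<Phi> \<Psi> a R =
     {transl \<Phi> k | k. \<bar>k\<bar> \<le> \<lceil>a\<rceil> - 1} \<union>
     {dil_trans \<Psi> j k | j k. j < R \<and> - \<lceil>a\<rceil> < k \<and> k < 2 ^ j * \<lceil>a\<rceil>}"

definition four_fun :: "real \<Rightarrow> real \<Rightarrow> int \<Rightarrow> real \<Rightarrow> complex" where
  "four_fun a \<omega> n = (\<lambda>x.
     let T1 = real_of_int (\<lceil>a\<rceil> - 1); T2 = real_of_int (2 * \<lceil>a\<rceil> - 1) in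
     complex_of_real (sqrt \<omega>) * exp (2 * complex_of_real pi * \<i> * of_int n * complex_of_real (\<omega> * x))
       * complex_of_real (indicator {- T1 / (\<omega> * (T1 + T2)) .. T2 / (\<omega> * (T1 + T2))} x))"

definition four_index :: "nat \<Rightarrow> int" where
  "four_index i = (if i \<le> 1 then 0 else if even i then int (i div 2) else - int (i div 2))"

definition Umat :: "(real \<Rightarrow> complex) \<Rightarrow> (real \<Rightarrow> complex) \<Rightarrow> real \<Rightarrow> real \<Rightarrow> nat \<Rightarrow> nat \<Rightarrow> complex" where
  "Umat \<Phi> \<Psi> a \<omega> i j = l2_inner (varphi \<Phi> \<Psi> a j) (four_fun a \<omega> (four_index i))"

text \<open>Operator norm on l2(N) of P_N A P^{M1}_{M2}: this operator only involves the rows 1..N and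
  the columns M1+1..M2 of A, so its norm is the sup of ||P_N A x|| over x supported in
  {M1+1..M2} with ||x|| <= 1.\<close>
definition PUP_norm :: "(nat \<Rightarrow> nat \<Rightarrow> complex) \<Rightarrow> nat \<Rightarrow> nat \<Rightarrow> nat \<Rightarrow> real" where
  "PUP_norm A N M1 M2 =
     Sup ((\<lambda>x. sqrt (\<Sum>i\<in>{1..N}. (cmod (\<Sum>j\<in>{M1<..M2}. A i j * x j))\<^sup>2)) `
          {x :: nat \<Rightarrow> complex. (\<Sum>j\<in>{M1<..M2}. (cmod (x j))\<^sup>2) \<le> 1})"

end

theory Submission
  imports Defs
begin


lemma entry_gen:
  fixes \<Psi> :: "real \<Rightarrow> complex" and C :: complex and I :: "real set" and s :: real
  assumes supp: "\<And>y. \<Psi> y \<noteq> 0 \<Longrightarrow> (y + real_of_int k) / 2 ^ j \<in> I"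
  shows "(LINT x|lborel. dil_trans \<Psi> j k x * (C * exp (- (\<i> * complex_of_real (x * s))) * complex_of_real (indicator I x)))
     = C * complex_of_real (2 powr (- real j / 2)) * exp (- (\<i> * complex_of_real (real_of_int k * s / 2 ^ j))) * fourier \<Psi> (s / 2 ^ j)"
proof -
  define g where "g x = complex_of_real (2 powr (real j / 2)) * \<Psi> (2 ^ j * x - of_int k) * exp (- (\<i> * complex_of_real (x * s)))" for x
  have pw: "dil_trans \<Psi> j k x * (C * exp (- (\<i> * complex_of_real (x * s))) * complex_of_real (indicator I x)) = C * g x" for x
  proof (cases "\<Psi> (2 ^ j * x - of_int k) = 0")
    case True then show ?thesis by (simp add: dil_trans_def g_def)
  next
    case False
    then have "(2 ^ j * x - of_int k + of_int k) / 2 ^ j \<in> I" by (rule supp)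
    then have "x \<in> I" by simp
    then show ?thesis by (simp add: dil_trans_def g_def)
  qed
  have c0: "(1 / 2 ^ j :: real) \<noteq> 0" by simp
  have "(LINT x|lborel. g x) = \<bar>1 / 2 ^ j\<bar> *\<^sub>R (LINT y|lborel. g (of_int k / 2 ^ j + (1 / 2 ^ j) * y))"
    by (rule lborel_integral_real_affine[OF c0])
  also have "\<dots> = (1 / 2 ^ j) *\<^sub>R (LINT y|lborel. (complex_of_real (2 powr (real j / 2)) * exp (- (\<i> * complex_of_real (real_of_int k * s / 2 ^ j)))) * (\<Psi> y * exp (- (\<i> * complex_of_real (y * (s / 2 ^ j))))))"
  proof -
    have "g (of_int k / 2 ^ j + (1 / 2 ^ j) * y) = (complex_of_real (2 powr (real j / 2)) * exp (- (\<i> * complex_of_real (real_of_int k * s / 2 ^ j)))) * (\<Psi> y * exp (- (\<i> * complex_of_real (y * (s / 2 ^ j)))))" for y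
    proof -
      have a1: "2 ^ j * (of_int k / 2 ^ j + (1 / 2 ^ j) * y) - of_int k = (y::real)" by (simp add: field_simps)
      have a2: "- (\<i> * complex_of_real ((of_int k / 2 ^ j + (1 / 2 ^ j) * y) * s)) = - (\<i> * complex_of_real (real_of_int k * s / 2 ^ j)) + - (\<i> * complex_of_real (y * (s / 2 ^ j)))"
        by (simp add: field_simps)
      show ?thesis unfolding g_def a1 a2 exp_add by (simp add: ac_simps)
    qed
    then show ?thesis by simp
  qed
  also have "\<dots> = complex_of_real (2 powr (- real j / 2)) * exp (- (\<i> * complex_of_real (real_of_int k * s / 2 ^ j))) * fourier \<Psi> (s / 2 ^ j)"
  proof -
    have r: "(1 / 2 ^ j :: real) * 2 powr (real j / 2) = 2 powr (- real j / 2)"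
      by (simp add: powr_minus_divide powr_realpow[symmetric] field_simps flip: powr_add) 
    have "(LINT y|lborel. (complex_of_real (2 powr (real j / 2)) * exp (- (\<i> * complex_of_real (real_of_int k * s / 2 ^ j)))) * (\<Psi> y * exp (- (\<i> * complex_of_real (y * (s / 2 ^ j))))))
       = (complex_of_real (2 powr (real j / 2)) * exp (- (\<i> * complex_of_real (real_of_int k * s / 2 ^ j)))) * fourier \<Psi> (s / 2 ^ j)"
      unfolding fourier_def by (rule integral_mult_right_zero)
    moreover have h1: "complex_of_real (2 powr (real j / 2)) / 2 ^ j = complex_of_real (2 powr - (real j / 2))"
    proof -
      have "complex_of_real (2 powr (real j / 2)) / 2 ^ j = complex_of_real ((1 / 2 ^ j :: real) * 2 powr (real j / 2))"
        by simp
      then show ?thesis unfolding r by simp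
    qed
    ultimately show ?thesis
      by (simp add: scaleR_conv_of_real ac_simps flip: of_real_mult) (simp add: h1[symmetric])
  qed
  finally have "(LINT x|lborel. g x) = \<dots>" .
  then show ?thesis unfolding pw by simp
qed



lemma integrable_Psi:
  fixes \<Psi> :: "real \<Rightarrow> complex"
  assumes "square_integrable \<Psi>" and supp: "\<And>y. \<Psi> y \<noteq> 0 \<Longrightarrow> y \<in> {0..a}"
  shows "integrable lborel \<Psi>"
proof (rule Bochner_Integration.integrable_bound)
  show "integrable lborel (\<lambda>x. indicator {0..a} x + (cmod (\<Psi> x))\<^sup>2 :: real)"
  proof (rule Bochner_Integration.integrable_add)
    show "integrable lborel (indicat_real {0..a})"
      by (rule integrable_real_indicator) (simp_all add: emeasure_lborel_Icc_eq)
    show "integrable lborel (\<lambda>x. (cmod (\<Psi> x))\<^sup>2)" using assms(1) unfolding square_integrable_def by simp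
  qed
  show "\<Psi> \<in> borel_measurable lborel" using assms(1) unfolding square_integrable_def by simp
  show "AE x in lborel. norm (\<Psi> x) \<le> norm (indicator {0..a} x + (cmod (\<Psi> x))\<^sup>2 :: real)"
  proof (rule AE_I2)
    fix x
    show "norm (\<Psi> x) \<le> norm (indicator {0..a} x + (cmod (\<Psi> x))\<^sup>2 :: real)"
    proof (cases "\<Psi> x = 0")
      case True then show ?thesis by simp
    next
      case False
      then have "x \<in> {0..a}" by (rule supp)
      moreover have "cmod (\<Psi> x) \<le> 1 + (cmod (\<Psi> x))\<^sup>2"
      proof (cases "cmod (\<Psi> x) \<le> 1")
        case True then show ?thesis by (smt (verit) zero_le_power2)
      next
        case False
        then have "cmod (\<Psi> x) * 1 \<le> cmod (\<Psi> x) * cmod (\<Psi> x)" by (intro mult_left_mono) auto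
        then show ?thesis by (simp add: power2_eq_square)
      qed
      ultimately show ?thesis by simp
    qed
  qed
qed

lemma isCont_fourier:
  fixes \<Psi> :: "real \<Rightarrow> complex"
  assumes int: "integrable lborel \<Psi>"
  shows "isCont (fourier \<Psi>) t"
  unfolding continuous_at_sequentially
proof safe
  fix X assume X: "X \<longlonglongrightarrow> t"
  have [measurable]: "\<Psi> \<in> borel_measurable lborel" using int by auto
  have mexp: "(\<lambda>x. exp (- (\<i> * complex_of_real (x * r)))) \<in> borel_measurable lborel" for r :: real
  proof -
    have "(\<lambda>x. exp (- (\<i> * complex_of_real (x * r)))) \<in> borel_measurable borel"
      by (intro borel_measurable_continuous_onI continuous_intros)
    then show ?thesis by simp
  qed
  show "(fourier \<Psi> \<circ> X) \<longlonglongrightarrow> fourier \<Psi> t"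
    unfolding comp_def fourier_def
  proof (rule integral_dominated_convergence[where w="\<lambda>x. cmod (\<Psi> x)"])
    show "(\<lambda>x. \<Psi> x * exp (- (\<i> * complex_of_real (x * t)))) \<in> borel_measurable lborel"
      using mexp by measurable
    show "(\<lambda>x. \<Psi> x * exp (- (\<i> * complex_of_real (x * X i)))) \<in> borel_measurable lborel" for i
      using mexp by measurable
    show "integrable lborel (\<lambda>x. cmod (\<Psi> x))" using int by (rule integrable_norm)
    show "AE x in lborel. (\<lambda>i. \<Psi> x * exp (- (\<i> * complex_of_real (x * X i)))) \<longlonglongrightarrow> \<Psi> x * exp (- (\<i> * complex_of_real (x * t)))"
      by (intro AE_I2 tendsto_intros X)
    show "AE x in lborel. norm (\<Psi> x * exp (- (\<i> * complex_of_real (x * X i)))) \<le> cmod (\<Psi> x)" for i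
    proof (intro AE_I2)
      fix x
      have "norm (exp (- (\<i> * complex_of_real (x * X i)))) = 1" by (simp add: norm_exp)
      then show "norm (\<Psi> x * exp (- (\<i> * complex_of_real (x * X i)))) \<le> cmod (\<Psi> x)"
        by (simp add: norm_mult)
    qed
  qed
qed

lemma AE_to_all:
  fixes F g :: "real \<Rightarrow> real"
  assumes cF: "\<And>z. isCont F z" and cg: "\<And>z. isCont g z"
    and ae: "AE z in lborel. F z \<le> g z"
  shows "F z \<le> g z"
proof (rule ccontr)
  assume "\<not> F z \<le> g z"
  then have pos: "0 < F z - g z" by simp
  have "isCont (\<lambda>z. F z - g z) z" using cF cg by (intro continuous_intros)
  then obtain d where d: "d > 0" "\<And>y. dist y z < d \<Longrightarrow> dist (F y - g y) (F z - g z) < F z - g z"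
    using pos unfolding continuous_at_eps_delta by metis
  have sub: "{z - d <..< z + d} \<subseteq> {y. \<not> F y \<le> g y}"
  proof
    fix y assume "y \<in> {z - d <..< z + d}"
    then have "dist y z < d" by (auto simp: dist_real_def)
    from d(2)[OF this] show "y \<in> {y. \<not> F y \<le> g y}" by (auto simp: dist_real_def)
  qed
  from ae obtain N where N0: "{y \<in> space lborel. \<not> F y \<le> g y} \<subseteq> N" "emeasure lborel N = 0" "N \<in> sets lborel"
    by (rule AE_E)
  then have N: "N \<in> null_sets lborel" "{y \<in> space lborel. \<not> F y \<le> g y} \<subseteq> N" by auto
  have "{z - d <..< z + d} \<subseteq> N" using sub N(2) by auto
  then have "emeasure lborel {z - d <..< z + d} \<le> emeasure lborel N"
    using N(1) by (intro emeasure_mono) auto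
  also have "\<dots> = 0" using N(1) by auto
  finally have "emeasure lborel {z - d <..< z + d} \<le> 0" .
  moreover have "emeasure lborel {z - d <..< z + d} = ennreal (2 * d)"
    using d(1) by (simp add: emeasure_lborel_Ioo)
  ultimately show False using d(1) by simp
qed



lemma geo_cis_zero:
  fixes \<delta> :: int and M :: nat and bb :: int
  assumes M: "M > 0" and d0: "\<delta> \<noteq> 0" and dM: "\<bar>\<delta>\<bar> < int M"
  shows "(\<Sum>r<M. cis (- (2 * pi * real_of_int (\<delta> * (bb + int r)) / real M))) = 0"
proof -
  define w where "w = cis (- (2 * pi * real_of_int \<delta> / real M))"
  have eq: "cis (- (2 * pi * real_of_int (\<delta> * (bb + int r)) / real M)) = cis (- (2 * pi * real_of_int (\<delta> * bb) / real M)) * w ^ r" for r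
    apply (simp only: w_def Complex.DeMoivre cis_mult)
    by (rule arg_cong[where f=cis]) (simp add: field_simps add_divide_distrib)
  have w1: "w \<noteq> 1"
  proof
    assume "w = 1"
    then have "exp (\<i> * complex_of_real (- (2 * pi * real_of_int \<delta> / real M))) = 1"
      unfolding w_def cis_conv_exp by simp
    then obtain n :: int where n: "- (2 * pi * real_of_int \<delta> / real M) = of_int (2 * n) * pi"
      unfolding exp_eq_1 by auto
    then have "pi * (- real_of_int \<delta>) = pi * (real_of_int n * real M)" using M by (simp add: field_simps)
    then have "- real_of_int \<delta> = real_of_int n * real M" using pi_neq_zero by (metis mult_left_cancel)
    then have "- \<delta> = n * int M" by (metis of_int_eq_iff of_int_mult of_int_minus of_int_of_nat_eq)
    then have "\<bar>\<delta>\<bar> = \<bar>n\<bar> * int M" by (metis abs_minus_cancel abs_mult abs_of_nat)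
    moreover have "n \<noteq> 0" using d0 \<open>- \<delta> = n * int M\<close> by auto
    ultimately have "\<bar>\<delta>\<bar> \<ge> int M" by (simp add: mult_le_cancel_right1 int_one_le_iff_zero_less)
    then show False using dM by simp
  qed
  have wM: "w ^ M = 1"
  proof -
    have "w ^ M = cis (2 * pi * real_of_int (- \<delta>))" unfolding w_def Complex.DeMoivre
      using M by (intro arg_cong[where f=cis]) (simp add: field_simps)
    also have "\<dots> = 1" by (rule cis_multiple_2pi) simp
    finally show ?thesis .
  qed
  have "(\<Sum>r<M. cis (- (2 * pi * real_of_int (\<delta> * (bb + int r)) / real M))) = cis (- (2 * pi * real_of_int (\<delta> * bb) / real M)) * (\<Sum>r<M. w ^ r)"
    unfolding eq by (simp add: sum_distrib_left)
  also have "(\<Sum>r<M. w ^ r) = 0" using geometric_sum[OF w1, of M] wM by simp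
  finally show ?thesis by simp
qed

lemma parseval:
  fixes D :: "'d set" and kk :: "'d \<Rightarrow> int" and y :: "'d \<Rightarrow> complex" and Ns :: "int set" and M :: nat and lo bb :: int
  assumes fin: "finite D" and inj: "inj_on kk D" and kr: "\<And>d. d \<in> D \<Longrightarrow> lo \<le> kk d \<and> kk d < lo + int M"
    and Ns: "Ns \<subseteq> (\<lambda>r. bb + int r) ` {..<M}" and M: "M > 0"
  shows "(\<Sum>n\<in>Ns. (cmod (\<Sum>d\<in>D. y d * cis (- (2 * pi * real_of_int (kk d * n) / real M))))\<^sup>2)
     \<le> real M * (\<Sum>d\<in>D. (cmod (y d))\<^sup>2)"
proof -
  define P where "P n = (\<Sum>d\<in>D. y d * cis (- (2 * pi * real_of_int (kk d * n) / real M)))" for n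
  define G where "G \<delta> = (\<Sum>r<M. cis (- (2 * pi * real_of_int (\<delta> * (bb + int r)) / real M)))" for \<delta>
  have G: "G (kk d - kk d') = (if d = d' then of_nat M else 0)" if "d \<in> D" "d' \<in> D" for d d'
  proof (cases "d = d'")
    case True then show ?thesis by (simp add: G_def)
  next
    case False
    then have "kk d - kk d' \<noteq> 0" using inj that by (auto dest: inj_onD)
    moreover have "\<bar>kk d - kk d'\<bar> < int M" using kr[OF that(1)] kr[OF that(2)] by auto
    ultimately show ?thesis using False geo_cis_zero[OF M, of "kk d - kk d'" bb] unfolding G_def by simp
  qed
  have sq: "complex_of_real ((cmod (P n))\<^sup>2) = (\<Sum>d\<in>D. \<Sum>d'\<in>D. y d * cnj (y d') * cis (- (2 * pi * real_of_int ((kk d - kk d') * n) / real M)))" for n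
  proof -
    have "complex_of_real ((cmod (P n))\<^sup>2) = P n * cnj (P n)" by (rule complex_norm_square)
    also have "\<dots> = (\<Sum>d\<in>D. \<Sum>d'\<in>D. (y d * cis (- (2 * pi * real_of_int (kk d * n) / real M))) * cnj (y d' * cis (- (2 * pi * real_of_int (kk d' * n) / real M))))"
      unfolding P_def cnj_sum by (rule sum_product)
    also have "\<dots> = (\<Sum>d\<in>D. \<Sum>d'\<in>D. y d * cnj (y d') * cis (- (2 * pi * real_of_int ((kk d - kk d') * n) / real M)))"
    proof (intro sum.cong refl)
      fix d d'
      have "cis (- (2 * pi * real_of_int (kk d * n) / real M)) * cis (- (- (2 * pi * real_of_int (kk d' * n) / real M))) = cis (- (2 * pi * real_of_int ((kk d - kk d') * n) / real M))"
        unfolding cis_mult using M by (intro arg_cong[where f=cis]) (simp add: field_simps)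
      then show "y d * cis (- (2 * pi * real_of_int (kk d * n) / real M)) * cnj (y d' * cis (- (2 * pi * real_of_int (kk d' * n) / real M))) = y d * cnj (y d') * cis (- (2 * pi * real_of_int ((kk d - kk d') * n) / real M))"
        by (simp add: cis_cnj ac_simps)
    qed
    finally show ?thesis .
  qed
  have fullsum: "complex_of_real (\<Sum>r<M. (cmod (P (bb + int r)))\<^sup>2) = complex_of_real (real M * (\<Sum>d\<in>D. (cmod (y d))\<^sup>2))"
  proof -
    have "complex_of_real (\<Sum>r<M. (cmod (P (bb + int r)))\<^sup>2) = (\<Sum>r<M. \<Sum>d\<in>D. \<Sum>d'\<in>D. y d * cnj (y d') * cis (- (2 * pi * real_of_int ((kk d - kk d') * (bb + int r)) / real M)))"
      by (simp only: of_real_sum sq)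
    also have "\<dots> = (\<Sum>d\<in>D. \<Sum>d'\<in>D. y d * cnj (y d') * G (kk d - kk d'))"
      unfolding G_def sum_distrib_left
      by (subst sum.swap) (rule sum.cong[OF refl], subst sum.swap, rule refl)
    also have "\<dots> = (\<Sum>d\<in>D. \<Sum>d'\<in>D. if d = d' then y d * cnj (y d') * of_nat M else 0)"
      by (intro sum.cong refl) (simp add: G)
    also have "\<dots> = (\<Sum>d\<in>D. y d * cnj (y d) * of_nat M)"
      using fin by (simp add: sum.delta)
    also have "\<dots> = complex_of_real (real M * (\<Sum>d\<in>D. (cmod (y d))\<^sup>2))"
      by (simp add: complex_norm_square[symmetric] sum_distrib_left sum_distrib_right ac_simps)
    finally show ?thesis .
  qed
  have "(\<Sum>n\<in>Ns. (cmod (P n))\<^sup>2) \<le> (\<Sum>n\<in>(\<lambda>r. bb + int r) ` {..<M}. (cmod (P n))\<^sup>2)"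
    using Ns by (intro sum_mono2) auto
  also have "\<dots> = (\<Sum>r<M. (cmod (P (bb + int r)))\<^sup>2)"
    by (subst sum.reindex) (auto simp: inj_on_def)
  also have "\<dots> = real M * (\<Sum>d\<in>D. (cmod (y d))\<^sup>2)"
    using fullsum of_real_eq_iff by blast
  finally show ?thesis unfolding P_def .
qed



lemma lvl_size_pos: "c \<ge> 1 \<Longrightarrow> lvl_size c j \<ge> 1"
proof -
  assume "c \<ge> 1"
  moreover have "2 ^ j * c \<ge> c" by simp
  ultimately show ?thesis unfolding lvl_size_def by linarith
qed

lemma wav_index_Inr:
  assumes c: "c \<ge> 1" and i: "\<not> i \<le> 2 * c - 1"
  shows "\<exists>j k. wav_index c i = Inr (j, k) \<and> - (int c - 1) \<le> k \<and> k \<le> 2 ^ j * int c - 1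
     \<and> i - 2 * c = (\<Sum>l<j. lvl_size c l) + nat (k + int c - 1)"
proof -
  define r where "r = i - 2 * c"
  define j where "j = (LEAST j. r < (\<Sum>l\<le>j. lvl_size c l))"
  define k where "k = int (r - (\<Sum>l<j. lvl_size c l)) - int (c - 1)"
  have wi: "wav_index c i = Inr (j, k)"
    unfolding wav_index_def r_def j_def k_def Let_def using i by simp
  have ex: "\<exists>j. r < (\<Sum>l\<le>j. lvl_size c l)"
  proof
    have "(\<Sum>l\<le>r. 1) \<le> (\<Sum>l\<le>r. lvl_size c l)" using lvl_size_pos[OF c] by (intro sum_mono) auto
    then show "r < (\<Sum>l\<le>r. lvl_size c l)" by simp
  qed
  have up: "r < (\<Sum>l<j. lvl_size c l) + lvl_size c j"
    using LeastI_ex[OF ex] unfolding j_def[symmetric] by (simp add: atMost_Suc lessThan_Suc_atMost[symmetric])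
  have low: "(\<Sum>l<j. lvl_size c l) \<le> r"
  proof (cases j)
    case 0 then show ?thesis by simp
  next
    case (Suc j')
    then have "j' < j" by simp
    then have "\<not> r < (\<Sum>l\<le>j'. lvl_size c l)" unfolding j_def by (rule not_less_Least)
    then show ?thesis using Suc by (simp add: lessThan_Suc_atMost)
  qed
  define S where "S = (\<Sum>l<j. lvl_size c l)"
  note up = up[folded S_def] and low = low[folded S_def]
  have ls: "lvl_size c j = 2 ^ j * c + c - 1" by (simp add: lvl_size_def)
  have "2 ^ j * c \<ge> c" by simp
  then have "int (lvl_size c j) = 2 ^ j * int c + int c - 1" using c unfolding ls by simp
  moreover have "int (r - S) = int r - int S" using low by simp
  moreover have "k = int (r - S) - int (c - 1)" unfolding k_def S_def ..
  moreover have "int (c - 1) = int c - 1" using c by simp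
  ultimately have kb: "- (int c - 1) \<le> k \<and> k \<le> 2 ^ j * int c - 1" using up low c by linarith
  have "nat (k + int c - 1) = r - S" using c unfolding k_def S_def by auto
  then have "r = (\<Sum>l<j. lvl_size c l) + nat (k + int c - 1)" using low unfolding S_def by simp
  then show ?thesis using wi kb unfolding r_def by blast
qed

lemma wav_index_Inl:
  assumes "i \<le> 2 * c - 1"
  shows "wav_index c i = Inl (int (i - 1) - int (c - 1))"
  using assms unfolding wav_index_def by simp

lemma wav_index_inj:
  assumes c: "c \<ge> 1" and i: "i \<ge> 1" "i' \<ge> 1" and eq: "wav_index c i = wav_index c i'"
  shows "i = i'"
proof (cases "i \<le> 2 * c - 1")
  case True
  show ?thesis
  proof (cases "i' \<le> 2 * c - 1")
    case True
    then show ?thesis using eq wav_index_Inl[OF \<open>i \<le> 2 * c - 1\<close>] wav_index_Inl[OF True] i by simp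
  next
    case False
    then show ?thesis using eq wav_index_Inl[OF True] wav_index_Inr[OF c False] by auto
  qed
next
  case False
  note F = False
  show ?thesis
  proof (cases "i' \<le> 2 * c - 1")
    case True
    then show ?thesis using eq wav_index_Inl[OF True] wav_index_Inr[OF c F] by auto
  next
    case False
    obtain j k where 1: "wav_index c i = Inr (j, k)" "i - 2 * c = (\<Sum>l<j. lvl_size c l) + nat (k + int c - 1)"
      using wav_index_Inr[OF c F] by blast
    obtain j' k' where 2: "wav_index c i' = Inr (j', k')" "i' - 2 * c = (\<Sum>l<j'. lvl_size c l) + nat (k' + int c - 1)"
      using wav_index_Inr[OF c False] by blast
    have "j = j'" "k = k'" using 1 2 eq by auto
    then have "i - 2 * c = i' - 2 * c" using 1 2 by simp
    then show ?thesis using F False by simp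
  qed
qed



lemma four_index_bound:
  assumes "i \<ge> 1"
  shows "- int (i div 2) \<le> four_index i \<and> four_index i \<le> int (i div 2)"
  using assms unfolding four_index_def by auto

lemma four_index_inj: "inj_on four_index {1..}"
proof (rule inj_onI)
  fix i i' :: nat assume i: "i \<in> {1..}" "i' \<in> {1..}" and eq: "four_index i = four_index i'"
  have pos: "four_index i > 0 \<longleftrightarrow> even i \<and> i \<ge> 2" and neg: "four_index i < 0 \<longleftrightarrow> odd i \<and> i \<ge> 3"
    if "i \<ge> 1" for i
    using that unfolding four_index_def by (auto elim: oddE)
  have pos': "four_index i' > 0 \<longleftrightarrow> even i' \<and> i' \<ge> 2" and neg': "four_index i' < 0 \<longleftrightarrow> odd i' \<and> i' \<ge> 3"
    using pos neg i by auto
  have pos: "four_index i > 0 \<longleftrightarrow> even i \<and> i \<ge> 2" and neg: "four_index i < 0 \<longleftrightarrow> odd i \<and> i \<ge> 3"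
    using pos neg i by auto
  have "i \<ge> 1" using i by simp
  then have "i = 1 \<or> (even i \<and> i \<ge> 2) \<or> (odd i \<and> i \<ge> 3)" by presburger
  then consider "i = 1" | "even i \<and> i \<ge> 2" | "odd i \<and> i \<ge> 3" by blast
  then show "i = i'"
  proof cases
    case 1
    then have "four_index i = 0" unfolding four_index_def by simp
    then have "\<not> (even i' \<and> i' \<ge> 2)" "\<not> (odd i' \<and> i' \<ge> 3)" using eq pos' neg' by auto
    moreover have "i' \<ge> 1" using i by simp
    ultimately show ?thesis using 1 by presburger
  next
    case 2
    then have "even i' \<and> i' \<ge> 2" using eq pos pos' by auto
    then show ?thesis using 2 eq unfolding four_index_def by auto
  next
    case 3
    then have "odd i' \<and> i' \<ge> 3" using eq neg neg' by auto
    then have "int (i div 2) = int (i' div 2)" using 3 eq unfolding four_index_def by auto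
    then have "i div 2 = i' div 2" by simp
    then show ?thesis using 3 \<open>odd i' \<and> i' \<ge> 3\<close> by (metis odd_two_times_div_two_succ)
  qed
qed



lemma weighted_cs:
  fixes u :: "nat \<Rightarrow> complex" and lam :: "nat \<Rightarrow> real" and J :: "nat set"
  assumes lam: "\<And>j. j \<in> J \<Longrightarrow> lam j > 0"
  shows "(cmod (\<Sum>j\<in>J. u j))\<^sup>2 \<le> (\<Sum>j\<in>J. lam j) * (\<Sum>j\<in>J. (cmod (u j))\<^sup>2 / lam j)"
proof -
  have "cmod (\<Sum>j\<in>J. u j) \<le> (\<Sum>j\<in>J. cmod (u j))" by (rule norm_sum)
  then have "(cmod (\<Sum>j\<in>J. u j))\<^sup>2 \<le> (\<Sum>j\<in>J. cmod (u j))\<^sup>2" by (intro power_mono) auto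
  also have "(\<Sum>j\<in>J. cmod (u j)) = (\<Sum>j\<in>J. sqrt (lam j) * (cmod (u j) / sqrt (lam j)))"
    using lam by (intro sum.cong) (auto simp: less_imp_le, metis less_irrefl)
  also have "(\<dots>)\<^sup>2 \<le> (\<Sum>j\<in>J. (sqrt (lam j))\<^sup>2) * (\<Sum>j\<in>J. (cmod (u j) / sqrt (lam j))\<^sup>2)"
    by (rule Cauchy_Schwarz_ineq_sum)
  also have "\<dots> = (\<Sum>j\<in>J. lam j) * (\<Sum>j\<in>J. (cmod (u j))\<^sup>2 / lam j)"
    using lam by (intro arg_cong2[where f="(*)"] sum.cong) (auto simp: power_divide less_imp_le)
  finally show ?thesis .
qed

lemma main_bound:
  fixes A :: "nat \<Rightarrow> nat \<Rightarrow> complex" and x :: "nat \<Rightarrow> complex" and F :: "real \<Rightarrow> complex"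
    and C :: "nat set" and lev :: "nat \<Rightarrow> nat" and kk :: "nat \<Rightarrow> int"
    and c m N R1 R2 v :: nat and L \<gamma> :: real
  assumes finC: "finite C"
    and inj: "inj_on (\<lambda>q. (lev q, kk q)) C"
    and levR: "\<And>q. q \<in> C \<Longrightarrow> R1 \<le> lev q \<and> lev q < R2"
    and kR: "\<And>q. q \<in> C \<Longrightarrow> - (int c - 1) \<le> kk q \<and> kk q \<le> 2 ^ lev q * int c - 1"
    and c1: "c \<ge> 1" and mc: "3 * c - 1 \<le> m"
    and Aeq: "\<And>i q. q \<in> C \<Longrightarrow> A i q = complex_of_real (sqrt (1 / real m) * 2 powr (- real (lev q) / 2))
        * cis (- (2 * pi * real_of_int (kk q * four_index i) / real (m * 2 ^ lev q)))
        * F (2 * pi * real_of_int (four_index i) / real (m * 2 ^ lev q))"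
    and Fb: "\<And>t. cmod (F t) \<le> L * \<bar>t\<bar> ^ v"
    and L0: "L \<ge> 0"
    and Nb: "real N \<le> \<gamma> * real m * 2 ^ R1" and \<gamma>: "0 < \<gamma>" "\<gamma> < 1"
    and x: "(\<Sum>q\<in>C. (cmod (x q))\<^sup>2) \<le> 1"
  shows "(\<Sum>i\<in>{1..N}. (cmod (\<Sum>q\<in>C. A i q * x q))\<^sup>2)
     \<le> L\<^sup>2 * (pi * \<gamma>) ^ (2 * v) * (\<Sum>j\<in>{R1..<R2}. ((1 / 2) ^ (2 * v)) ^ (j - R1))"
proof -
  define J where "J = {R1..<R2}"
  define lam :: "nat \<Rightarrow> real" where "lam j = ((1 / 2) ^ (2 * v)) ^ (j - R1)" for j
  define Mj :: "nat \<Rightarrow> nat" where "Mj j = m * 2 ^ j" for j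
  define Cj where "Cj j = {q \<in> C. lev q = j}" for j
  define t where "t j i = 2 * pi * real_of_int (four_index i) / real (Mj j)" for j i
  define w where "w j i = complex_of_real (sqrt (1 / real m) * 2 powr (- real j / 2)) * F (t j i)" for j i
  define p where "p j i = (\<Sum>q\<in>Cj j. x q * cis (- (2 * pi * real_of_int (kk q * four_index i) / real (Mj j))))" for j i
  have m0: "m > 0" using mc c1 by simp
  have lam0: "lam j > 0" for j unfolding lam_def by simp
  have finJ: "finite J" unfolding J_def by simp
  have stepA: "(\<Sum>q\<in>C. A i q * x q) = (\<Sum>j\<in>J. w j i * p j i)" for i
  proof -
    have "(\<Sum>q\<in>C. A i q * x q) = (\<Sum>j\<in>J. \<Sum>q\<in>{q \<in> C. lev q = j}. A i q * x q)"
      using finC finJ levR unfolding J_def by (intro sum.group[symmetric]) auto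
    also have "\<dots> = (\<Sum>j\<in>J. w j i * p j i)"
    proof (intro sum.cong refl)
      fix j assume "j \<in> J"
      have "(\<Sum>q\<in>{q \<in> C. lev q = j}. A i q * x q) = (\<Sum>q\<in>Cj j. w j i * (x q * cis (- (2 * pi * real_of_int (kk q * four_index i) / real (Mj j)))))"
        unfolding Cj_def by (intro sum.cong refl) (auto simp: Aeq w_def t_def Mj_def ac_simps)
      then show "(\<Sum>q\<in>{q \<in> C. lev q = j}. A i q * x q) = w j i * p j i"
        unfolding p_def by (simp add: sum_distrib_left)
    qed
    finally show ?thesis .
  qed
  have wb: "(cmod (w j i))\<^sup>2 \<le> (1 / real m) * (1 / 2 ^ j) * (L\<^sup>2 * (pi * \<gamma>) ^ (2 * v) * lam j)"
    if j: "j \<in> J" and i: "i \<in> {1..N}" for j i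
  proof -
    have Rj: "R1 \<le> j" using j unfolding J_def by simp
    have ni: "\<bar>real_of_int (four_index i)\<bar> \<le> real N / 2"
    proof -
      have "\<bar>four_index i\<bar> \<le> int (i div 2)" using four_index_bound[of i] i by auto
      also have "int (i div 2) \<le> int (N div 2)" using i by (simp add: div_le_mono)
      finally have "\<bar>real_of_int (four_index i)\<bar> \<le> real (N div 2)" by linarith
      also have "real (N div 2) \<le> real N / 2" by linarith
      finally show ?thesis .
    qed
    have tb: "\<bar>t j i\<bar> \<le> pi * \<gamma> * (1 / 2) ^ (j - R1)"
    proof -
      have "\<bar>t j i\<bar> = 2 * pi * \<bar>real_of_int (four_index i)\<bar> / (real m * 2 ^ j)"
        unfolding t_def Mj_def by (simp add: abs_mult)
      also have "\<dots> \<le> 2 * pi * (real N / 2) / (real m * 2 ^ j)"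
        using ni m0 by (intro divide_right_mono mult_left_mono) auto
      also have "\<dots> \<le> 2 * pi * ((\<gamma> * real m * 2 ^ R1) / 2) / (real m * 2 ^ j)"
        using Nb m0 by (intro divide_right_mono mult_left_mono) auto
      also have "\<dots> = pi * \<gamma> * (2 ^ R1 / 2 ^ j)" using m0 by (simp add: field_simps)
      also have "2 ^ R1 / 2 ^ j = ((1::real) / 2) ^ (j - R1)"
        using Rj by (simp add: power_diff power_divide)
      finally show ?thesis .
    qed
    have "cmod (F (t j i)) \<le> L * \<bar>t j i\<bar> ^ v" by (rule Fb)
    also have "\<dots> \<le> L * (pi * \<gamma> * (1 / 2) ^ (j - R1)) ^ v"
      using tb L0 by (intro mult_left_mono power_mono) auto
    finally have Fb2: "(cmod (F (t j i)))\<^sup>2 \<le> (L * (pi * \<gamma> * (1 / 2) ^ (j - R1)) ^ v)\<^sup>2"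
      by (intro power_mono) auto
    have "(L * (pi * \<gamma> * (1 / 2) ^ (j - R1)) ^ v)\<^sup>2 = L\<^sup>2 * (pi * \<gamma>) ^ (2 * v) * lam j"
    proof -
      have e1: "(pi ^ v)\<^sup>2 = pi ^ (2 * v)" "(\<gamma> ^ v)\<^sup>2 = \<gamma> ^ (2 * v)" by (simp_all add: power_mult[symmetric] mult.commute)
      have e2: "(((1 / 2) ^ (j - R1)) ^ v)\<^sup>2 = (((1::real) / 2) ^ (2 * v)) ^ (j - R1)"
        by (simp only: power_mult[symmetric]) (simp add: ac_simps)
      show ?thesis unfolding lam_def power_mult_distrib e1 e2 by (simp only: mult.assoc)
    qed
    note Fb2 = Fb2[unfolded this]
    have s2: "(2 powr (- real j / 2))\<^sup>2 = 1 / 2 ^ j"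
    proof -
      have "(2 powr (- real j / 2))\<^sup>2 = 2 powr (- real j / 2) * 2 powr (- real j / 2)" by (simp add: power2_eq_square)
      also have "\<dots> = 2 powr (- real j)" by (simp flip: powr_add)
      also have "\<dots> = 1 / 2 ^ j" by (simp add: powr_minus_divide powr_realpow)
      finally show ?thesis .
    qed
    have "(cmod (w j i))\<^sup>2 = (1 / real m) * (2 powr (- real j / 2))\<^sup>2 * (cmod (F (t j i)))\<^sup>2"
      unfolding w_def using m0 by (simp add: norm_mult power_mult_distrib abs_mult real_sqrt_pow2)
    also have "\<dots> \<le> (1 / real m) * (1 / 2 ^ j) * (L\<^sup>2 * (pi * \<gamma>) ^ (2 * v) * lam j)"
      unfolding s2 using Fb2 by (intro mult_left_mono) auto
    finally show ?thesis .
  qed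
  have pb: "(\<Sum>i\<in>{1..N}. (cmod (p j i))\<^sup>2) \<le> real (Mj j) * (\<Sum>q\<in>Cj j. (cmod (x q))\<^sup>2)"
    if j: "j \<in> J" for j
  proof -
    have Rj: "R1 \<le> j" using j unfolding J_def by simp
    have NM: "N < Mj j"
    proof (cases "N = 0")
      case True then show ?thesis using m0 unfolding Mj_def by simp
    next
      case False
      have "real N \<le> \<gamma> * real m * 2 ^ R1" by (rule Nb)
      also have "\<dots> < real m * 2 ^ R1" using \<gamma> m0 False Nb by (simp add: mult_strict_right_mono)
      also have "\<dots> \<le> real m * 2 ^ j" using Rj by (intro mult_left_mono power_increasing) auto
      finally have "real N < real m * 2 ^ j" .
      then have "real N < real (m * 2 ^ j)" by simp
      then show ?thesis unfolding Mj_def by (simp only: of_nat_less_iff)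
    qed
    have "(\<Sum>i\<in>{1..N}. (cmod (p j i))\<^sup>2) = (\<Sum>n\<in>four_index ` {1..N}. (cmod (\<Sum>q\<in>Cj j. x q * cis (- (2 * pi * real_of_int (kk q * n) / real (Mj j)))))\<^sup>2)"
      unfolding p_def
      by (subst sum.reindex) (auto intro: inj_on_subset[OF four_index_inj])
    also have "\<dots> \<le> real (Mj j) * (\<Sum>q\<in>Cj j. (cmod (x q))\<^sup>2)"
    proof (rule parseval[where lo = "- (int c - 1)" and bb = "- int (N div 2)"])
      show "finite (Cj j)" using finC unfolding Cj_def by simp
      show "inj_on kk (Cj j)" using inj unfolding Cj_def inj_on_def by auto
      show "0 < Mj j" using m0 unfolding Mj_def by simp
      show "- (int c - 1) \<le> kk q \<and> kk q < - (int c - 1) + int (Mj j)" if q: "q \<in> Cj j" for q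
      proof -
        have q': "q \<in> C" "lev q = j" using q unfolding Cj_def by auto
        have "(2 * int c - 1) * 1 \<le> (2 * int c - 1) * 2 ^ j" using c1 by (intro mult_left_mono) auto
        moreover have "int (3 * c - 1) \<le> int m" using mc by simp
        then have "(3 * int c - 1) * 2 ^ j \<le> int m * 2 ^ j" using c1 by (intro mult_right_mono) auto
        ultimately have "2 ^ j * int c + int c - 2 < int m * 2 ^ j" by (simp add: algebra_simps)
        then show ?thesis using kR[OF q'(1)] q'(2) unfolding Mj_def by simp
      qed
      show "four_index ` {1..N} \<subseteq> (\<lambda>r. - int (N div 2) + int r) ` {..<Mj j}"
      proof
        fix n assume "n \<in> four_index ` {1..N}"
        then obtain i where i: "i \<in> {1..N}" "n = four_index i" by auto
        have "- int (i div 2) \<le> n \<and> n \<le> int (i div 2)" using four_index_bound[of i] i by auto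
        moreover have "i div 2 \<le> N div 2" using i by (simp add: div_le_mono)
        ultimately have b: "- int (N div 2) \<le> n" "n \<le> int (N div 2)" by auto
        define r where "r = nat (n + int (N div 2))"
        have "n = - int (N div 2) + int r" using b unfolding r_def by simp
        moreover have "r < Mj j" using b NM unfolding r_def by linarith
        ultimately show "n \<in> (\<lambda>r. - int (N div 2) + int r) ` {..<Mj j}" by auto
      qed
    qed
    finally show ?thesis .
  qed
  have "(\<Sum>i\<in>{1..N}. (cmod (\<Sum>q\<in>C. A i q * x q))\<^sup>2) = (\<Sum>i\<in>{1..N}. (cmod (\<Sum>j\<in>J. w j i * p j i))\<^sup>2)"
    by (simp add: stepA)
  also have "\<dots> \<le> (\<Sum>i\<in>{1..N}. (\<Sum>j\<in>J. lam j) * (\<Sum>j\<in>J. (cmod (w j i * p j i))\<^sup>2 / lam j))"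
    by (intro sum_mono weighted_cs lam0)
  also have "\<dots> = (\<Sum>j\<in>J. lam j) * (\<Sum>j\<in>J. (1 / lam j) * (\<Sum>i\<in>{1..N}. (cmod (w j i))\<^sup>2 * (cmod (p j i))\<^sup>2))"
  proof -
    have "(\<Sum>i\<in>{1..N}. (\<Sum>j\<in>J. lam j) * (\<Sum>j\<in>J. (cmod (w j i * p j i))\<^sup>2 / lam j))
        = (\<Sum>j\<in>J. lam j) * (\<Sum>i\<in>{1..N}. \<Sum>j\<in>J. (1 / lam j) * ((cmod (w j i))\<^sup>2 * (cmod (p j i))\<^sup>2))"
      by (simp add: sum_distrib_left norm_mult power_mult_distrib)
    also have "(\<Sum>i\<in>{1..N}. \<Sum>j\<in>J. (1 / lam j) * ((cmod (w j i))\<^sup>2 * (cmod (p j i))\<^sup>2))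
        = (\<Sum>j\<in>J. \<Sum>i\<in>{1..N}. (1 / lam j) * ((cmod (w j i))\<^sup>2 * (cmod (p j i))\<^sup>2))"
      by (rule sum.swap)
    also have "\<dots> = (\<Sum>j\<in>J. (1 / lam j) * (\<Sum>i\<in>{1..N}. (cmod (w j i))\<^sup>2 * (cmod (p j i))\<^sup>2))"
      by (simp only: sum_distrib_left)
    finally show ?thesis .
  qed
  also have "\<dots> \<le> (\<Sum>j\<in>J. lam j) * (\<Sum>j\<in>J. L\<^sup>2 * (pi * \<gamma>) ^ (2 * v) * (\<Sum>q\<in>Cj j. (cmod (x q))\<^sup>2))"
  proof (intro mult_left_mono sum_mono)
    fix j assume j: "j \<in> J"
    have "(\<Sum>i\<in>{1..N}. (cmod (w j i))\<^sup>2 * (cmod (p j i))\<^sup>2) \<le> (\<Sum>i\<in>{1..N}. ((1 / real m) * (1 / 2 ^ j) * (L\<^sup>2 * (pi * \<gamma>) ^ (2 * v) * lam j)) * (cmod (p j i))\<^sup>2)"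
      using wb[OF j] by (intro sum_mono mult_right_mono) auto
    also have "\<dots> = ((1 / real m) * (1 / 2 ^ j) * (L\<^sup>2 * (pi * \<gamma>) ^ (2 * v) * lam j)) * (\<Sum>i\<in>{1..N}. (cmod (p j i))\<^sup>2)"
      by (simp add: sum_distrib_left)
    also have "\<dots> \<le> ((1 / real m) * (1 / 2 ^ j) * (L\<^sup>2 * (pi * \<gamma>) ^ (2 * v) * lam j)) * (real (Mj j) * (\<Sum>q\<in>Cj j. (cmod (x q))\<^sup>2))"
      using pb[OF j] L0 lam0[of j] by (intro mult_left_mono) auto
    also have "\<dots> = lam j * (L\<^sup>2 * (pi * \<gamma>) ^ (2 * v) * (\<Sum>q\<in>Cj j. (cmod (x q))\<^sup>2))"
      using m0 unfolding Mj_def by (simp add: field_simps)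
    finally have "(\<Sum>i\<in>{1..N}. (cmod (w j i))\<^sup>2 * (cmod (p j i))\<^sup>2) \<le> lam j * (L\<^sup>2 * (pi * \<gamma>) ^ (2 * v) * (\<Sum>q\<in>Cj j. (cmod (x q))\<^sup>2))" .
    then show "1 / lam j * (\<Sum>i\<in>{1..N}. (cmod (w j i))\<^sup>2 * (cmod (p j i))\<^sup>2) \<le> L\<^sup>2 * (pi * \<gamma>) ^ (2 * v) * (\<Sum>q\<in>Cj j. (cmod (x q))\<^sup>2)"
      using lam0[of j] by (simp add: field_simps)
  next
    show "0 \<le> (\<Sum>j\<in>J. lam j)" using lam0 by (intro sum_nonneg) (auto simp: less_imp_le)
  qed
  also have "(\<Sum>j\<in>J. L\<^sup>2 * (pi * \<gamma>) ^ (2 * v) * (\<Sum>q\<in>Cj j. (cmod (x q))\<^sup>2)) = L\<^sup>2 * (pi * \<gamma>) ^ (2 * v) * (\<Sum>q\<in>C. (cmod (x q))\<^sup>2)"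
  proof -
    have "(\<Sum>j\<in>J. (\<Sum>q\<in>Cj j. (cmod (x q))\<^sup>2)) = (\<Sum>q\<in>C. (cmod (x q))\<^sup>2)"
      using finC finJ levR unfolding J_def Cj_def by (intro sum.group) auto
    then show ?thesis by (simp only: sum_distrib_left[symmetric])
  qed
  also have "(\<Sum>j\<in>J. lam j) * (L\<^sup>2 * (pi * \<gamma>) ^ (2 * v) * (\<Sum>q\<in>C. (cmod (x q))\<^sup>2)) \<le> (\<Sum>j\<in>J. lam j) * (L\<^sup>2 * (pi * \<gamma>) ^ (2 * v) * 1)"
    using x lam0 by (intro mult_left_mono sum_nonneg) (auto simp: less_imp_le)
  finally show ?thesis unfolding J_def lam_def by (simp add: ac_simps)
qed



lemma onb_distinct:
  assumes onb: "l2_orthonormal_basis e" and eq: "e s = e s'"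
  shows "s = s'"
proof (rule ccontr)
  assume ne: "s \<noteq> s'"
  have "l2_inner (e s) (e s) = 1" using onb unfolding l2_orthonormal_basis_def by simp
  moreover have "l2_inner (e s) (e s') = 0" using onb ne unfolding l2_orthonormal_basis_def by simp
  ultimately show False using eq by simp
qed

lemma col_info:
  fixes \<Phi> \<Psi> :: "real \<Rightarrow> complex"
  assumes wav: "compact_MRA_wavelet \<Phi> \<Psi> a" and a1: "a \<ge> 1"
    and sub: "{varphi \<Phi> \<Psi> a j | j. M1 < j \<and> j \<le> M2} \<subseteq> Omega_R \<Phi> \<Psi> a R2 - Omega_R \<Phi> \<Psi> a R1"
    and q: "q \<in> {M1<..M2}" and c: "c = nat \<lceil>a\<rceil>"
  shows "\<exists>j k. wav_index c q = Inr (j, k) \<and> R1 \<le> j \<and> j < R2 \<and> - (int c - 1) \<le> k \<and> k \<le> 2 ^ j * int c - 1"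
proof -
  have "\<lceil>(1::real)\<rceil> \<le> \<lceil>a\<rceil>" by (rule ceiling_mono[OF a1])
  then have h1: "1 \<le> \<lceil>a\<rceil>" by simp
  have ca: "\<lceil>a\<rceil> = int c" "c \<ge> 1" unfolding c using h1 by arith+
  define e where "e = (\<lambda>s::int + (nat \<times> int). case s of Inl k \<Rightarrow> transl \<Phi> k | Inr (j, k) \<Rightarrow> dil_trans \<Psi> j k)"
  have onb: "l2_orthonormal_basis e" using wav unfolding compact_MRA_wavelet_def e_def by simp
  have vq: "varphi \<Phi> \<Psi> a q \<in> Omega_R \<Phi> \<Psi> a R2 - Omega_R \<Phi> \<Psi> a R1" using sub q by auto
  have q1: "q \<ge> 1" using q by auto
  show ?thesis
  proof (cases "q \<le> 2 * c - 1")
    case True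
    define k0 where "k0 = int (q - 1) - int (c - 1)"
    have "varphi \<Phi> \<Psi> a q = transl \<Phi> k0"
      unfolding varphi_def c[symmetric] wav_index_Inl[OF True] wav_fun_def k0_def by simp
    moreover have "\<bar>k0\<bar> \<le> \<lceil>a\<rceil> - 1" using True q1 ca unfolding k0_def by auto
    ultimately have "varphi \<Phi> \<Psi> a q \<in> Omega_R \<Phi> \<Psi> a R1" unfolding Omega_R_def by auto
    then show ?thesis using vq by simp
  next
    case False
    obtain j k where jk: "wav_index c q = Inr (j, k)" "- (int c - 1) \<le> k" "k \<le> 2 ^ j * int c - 1"
      using wav_index_Inr[OF ca(2) False] by blast
    have vd: "varphi \<Phi> \<Psi> a q = dil_trans \<Psi> j k"
      unfolding varphi_def c[symmetric] jk(1) wav_fun_def by simp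
    have kr: "- \<lceil>a\<rceil> < k \<and> k < 2 ^ j * \<lceil>a\<rceil>" using jk ca by auto
    have "R1 \<le> j"
    proof (rule ccontr)
      assume "\<not> R1 \<le> j"
      then have "varphi \<Phi> \<Psi> a q \<in> Omega_R \<Phi> \<Psi> a R1" unfolding vd Omega_R_def using kr by auto
      then show False using vq by simp
    qed
    moreover have "j < R2"
    proof (rule ccontr)
      assume nj: "\<not> j < R2"
      have "dil_trans \<Psi> j k \<in> Omega_R \<Phi> \<Psi> a R2" using vq vd by simp
      then consider k' where "dil_trans \<Psi> j k = transl \<Phi> k'"
        | j' k' where "dil_trans \<Psi> j k = dil_trans \<Psi> j' k'" "j' < R2"
        unfolding Omega_R_def by blast
      then show False
      proof cases
        case 1
        then have "e (Inr (j, k)) = e (Inl k')" unfolding e_def by simp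
        then show False using onb_distinct[OF onb] by blast
      next
        case 2
        then have "e (Inr (j, k)) = e (Inr (j', k'))" unfolding e_def by simp
        then have "(j, k) = (j', k')" using onb_distinct[OF onb] by blast
        then show False using 2 nj by simp
      qed
    qed
    ultimately show ?thesis using jk by blast
  qed
qed



lemma Umat_entry:
  fixes \<Phi> \<Psi> :: "real \<Rightarrow> complex" and a \<omega> :: real and c m j q i :: nat and k :: int
  assumes supp: "\<And>y. \<Psi> y \<noteq> 0 \<Longrightarrow> y \<in> {0..a}" and a1: "a \<ge> 1"
    and c: "c = nat \<lceil>a\<rceil>" and m0: "m > 0" and om: "\<omega> = 1 / real m" and mc: "3 * c - 1 \<le> m"
    and wi: "wav_index c q = Inr (j, k)" and kb: "- (int c - 1) \<le> k" "k \<le> 2 ^ j * int c - 1"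
  shows "Umat \<Phi> \<Psi> a \<omega> i q = complex_of_real (sqrt (1 / real m) * 2 powr (- real j / 2))
        * cis (- (2 * pi * real_of_int (k * four_index i) / real (m * 2 ^ j)))
        * fourier \<Psi> (2 * pi * real_of_int (four_index i) / real (m * 2 ^ j))"
proof -
  have "\<lceil>(1::real)\<rceil> \<le> \<lceil>a\<rceil>" by (rule ceiling_mono[OF a1])
  then have h1: "1 \<le> \<lceil>a\<rceil>" by simp
  have ca: "\<lceil>a\<rceil> = int c" "c \<ge> 1" unfolding c using h1 by arith+
  have ac: "a \<le> real c" using ca(1) by (metis le_of_int_ceiling of_int_of_nat_eq)
  define n where "n = four_index i"
  define T1 where "T1 = real_of_int (\<lceil>a\<rceil> - 1)"
  define T2 where "T2 = real_of_int (2 * \<lceil>a\<rceil> - 1)"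
  define I where "I = {- T1 / (\<omega> * (T1 + T2)) .. T2 / (\<omega> * (T1 + T2))}"
  define s where "s = 2 * pi * real_of_int n * \<omega>"
  have T1c: "T1 = real c - 1" and T2c: "T2 = 2 * real c - 1" unfolding T1_def T2_def using ca by simp_all
  have vq: "varphi \<Phi> \<Psi> a q = dil_trans \<Psi> j k"
    unfolding varphi_def c[symmetric] wi wav_fun_def by simp
  have cnj4: "cnj (four_fun a \<omega> n x) = complex_of_real (sqrt \<omega>) * exp (- (\<i> * complex_of_real (x * s))) * complex_of_real (indicator I x)" for x
  proof -
    have eqA: "cnj (2 * complex_of_real pi * \<i> * of_int n * complex_of_real (\<omega> * x)) = - (\<i> * complex_of_real (x * s))"
      unfolding s_def by (simp add: algebra_simps)
    have eqB: "cnj (four_fun a \<omega> n x) = complex_of_real (sqrt \<omega>) * exp (cnj (2 * complex_of_real pi * \<i> * of_int n * complex_of_real (\<omega> * x))) * complex_of_real (indicator I x)"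
      unfolding four_fun_def Let_def I_def T1_def T2_def by (simp only: complex_cnj_mult complex_cnj_complex_of_real exp_cnj)
    show ?thesis using eqB unfolding eqA .
  qed
  have D: "0 < \<omega> * (T1 + T2)" "\<omega> * (T1 + T2) \<le> 1"
  proof -
    have "T1 + T2 = 3 * real c - 2" unfolding T1c T2c by simp
    moreover have "3 * real c - 2 \<ge> 1" using ca by simp
    moreover have "3 * real c - 2 \<le> real m" using mc ca by linarith
    ultimately show "0 < \<omega> * (T1 + T2)" "\<omega> * (T1 + T2) \<le> 1" using m0 unfolding om by (simp_all add: field_simps)
  qed
  have T10: "T1 \<ge> 0" "T2 \<ge> 0" using ca unfolding T1c T2c by simp_all
  have T1le: "T1 \<le> T1 / (\<omega> * (T1 + T2))" using D T10 by (simp add: le_divide_eq mult_left_le)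
  have T2le: "T2 \<le> T2 / (\<omega> * (T1 + T2))" using D T10 by (simp add: le_divide_eq mult_left_le)
  have cover: "(y + real_of_int k) / 2 ^ j \<in> I" if "\<Psi> y \<noteq> 0" for y
  proof -
    have y: "0 \<le> y" "y \<le> a" using supp[OF that] by auto
    define P :: real where "P = 2 ^ j"
    have P1: "P \<ge> 1" unfolding P_def by simp
    have kr1: "real_of_int (- (int c - 1)) \<le> real_of_int k" "real_of_int k \<le> real_of_int (2 ^ j * int c - 1)"
      using kb by (simp_all only: of_int_le_iff)
    have kr: "- T1 \<le> real_of_int k" "real_of_int k \<le> P * real c - 1"
      using kr1 unfolding T1c P_def by simp_all
    have "- T1 \<le> - T1 / P" using T10 P1 by (simp add: divide_le_eq mult_le_cancel_left1)
    also have "- T1 / P \<le> (y + real_of_int k) / P" using kr y P1 by (intro divide_right_mono) auto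
    finally have lo: "- T1 \<le> (y + real_of_int k) / P" .
    have "(real c - 1) * 1 \<le> (real c - 1) * P" using P1 ca by (intro mult_left_mono) auto
    then have "y + real_of_int k \<le> T2 * P" using kr y ac unfolding T2c by (simp add: algebra_simps)
    then have hi: "(y + real_of_int k) / P \<le> T2" using P1 by (simp add: divide_le_eq)
    have "- T1 / (\<omega> * (T1 + T2)) \<le> - T1" using T1le by simp
    then show ?thesis using lo hi T2le unfolding I_def P_def by auto
  qed
  have "Umat \<Phi> \<Psi> a \<omega> i q = (LINT x|lborel. dil_trans \<Psi> j k x * (complex_of_real (sqrt \<omega>) * exp (- (\<i> * complex_of_real (x * s))) * complex_of_real (indicator I x)))"
    unfolding Umat_def l2_inner_def vq n_def[symmetric] cnj4 ..
  also have "\<dots> = complex_of_real (sqrt \<omega>) * complex_of_real (2 powr (- real j / 2)) * exp (- (\<i> * complex_of_real (real_of_int k * s / 2 ^ j))) * fourier \<Psi> (s / 2 ^ j)"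
    by (rule entry_gen[OF cover])
  also have "\<dots> = complex_of_real (sqrt (1 / real m) * 2 powr (- real j / 2))
        * cis (- (2 * pi * real_of_int (k * four_index i) / real (m * 2 ^ j)))
        * fourier \<Psi> (2 * pi * real_of_int (four_index i) / real (m * 2 ^ j))"
  proof -
    have e1: "s / 2 ^ j = 2 * pi * real_of_int (four_index i) / real (m * 2 ^ j)"
      unfolding s_def om n_def by simp
    have e2: "exp (- (\<i> * complex_of_real (real_of_int k * s / 2 ^ j))) = cis (- (2 * pi * real_of_int (k * four_index i) / real (m * 2 ^ j)))"
    proof -
      have "real_of_int k * s / 2 ^ j = 2 * pi * real_of_int (k * four_index i) / real (m * 2 ^ j)"
        unfolding s_def om n_def by simp
      then show ?thesis unfolding cis_conv_exp by simp
    qed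
    show ?thesis unfolding e1 e2 om by simp
  qed
  finally show ?thesis .
qed



theorem lemma7p19:
  fixes \<Phi> \<Psi> \<theta> :: "real \<Rightarrow> complex" and a \<omega> \<gamma> :: real and v R1 R2 M1 M2 N :: nat
  assumes wav: "compact_MRA_wavelet \<Phi> \<Psi> a" and a1: "a \<ge> 1"
    and vm: "vanishing_moments \<Psi> v \<theta>" and v1: "v \<ge> 1"
    and om0: "0 < \<omega>" and om1: "\<omega> < 1 / real_of_int ((\<lceil>a\<rceil> - 1) + (2 * \<lceil>a\<rceil> - 1))"
    and omN: "\<exists>m::nat. 1 / \<omega> = real m"
    and R1: "R1 \<ge> 1" and R12: "R2 > R1"
    and M12: "M1 < M2"
    and sub: "{varphi \<Phi> \<Psi> a j | j. M1 < j \<and> j \<le> M2} \<subseteq> Omega_R \<Phi> \<Psi> a R2 - Omega_R \<Phi> \<Psi> a R1"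
    and \<gamma>: "0 < \<gamma>" "\<gamma> < 1"
    and N: "real N \<le> \<gamma> * (1 / \<omega>) * 2 ^ R1"
  shows "ereal (PUP_norm (Umat \<Phi> \<Psi> a \<omega>) N M1 M2)
    \<le> ereal (pi\<^sup>2 / 4) * Linf_norm \<theta> * ereal ((2 * pi * \<gamma>) ^ v
        * sqrt ((1 - 2 powr (2 * real v * (real R1 - real R2))) / (1 - 2 powr (- 2 * real v))))"
proof -
  define c where "c = nat \<lceil>a\<rceil>"
  have "\<lceil>(1::real)\<rceil> \<le> \<lceil>a\<rceil>" by (rule ceiling_mono[OF a1])
  then have h1: "1 \<le> \<lceil>a\<rceil>" by simp
  have ca: "\<lceil>a\<rceil> = int c" "c \<ge> 1" unfolding c_def using h1 by arith+
  obtain m :: nat where m: "1 / \<omega> = real m" using omN by blast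
  have m0: "m > 0" using m om0 by (cases "m = 0") auto
  have om: "\<omega> = 1 / real m" using m om0 m0 by (simp add: field_simps)
  have mc: "3 * c - 1 \<le> m"
  proof -
    have d: "real_of_int ((\<lceil>a\<rceil> - 1) + (2 * \<lceil>a\<rceil> - 1)) = 3 * real c - 2" using ca by simp
    have d1: "3 * real c - 2 \<ge> 1" using ca by simp
    have "1 / real m < 1 / (3 * real c - 2)" using om1 unfolding d om .
    then have "3 * real c - 2 < real m"
    proof (rule contrapos_pp)
      assume "\<not> 3 * real c - 2 < real m"
      then have "real m \<le> 3 * real c - 2" by simp
      then have "1 / (3 * real c - 2) \<le> 1 / real m" using m0 d1 by (intro divide_left_mono) auto
      then show "\<not> 1 / real m < 1 / (3 * real c - 2)" by simp
    qed
    then show ?thesis using ca by linarith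
  qed
  have sqP: "square_integrable \<Psi>" using wav unfolding compact_MRA_wavelet_def by blast
  have fsP: "fsupport \<Psi> = {0..a}" using wav unfolding compact_MRA_wavelet_def by blast
  have supp: "y \<in> {0..a}" if "\<Psi> y \<noteq> 0" for y
  proof -
    have "y \<in> {x. \<Psi> x \<noteq> 0}" using that by simp
    then have "y \<in> closure {x. \<Psi> x \<noteq> 0}" by (rule subsetD[OF closure_subset])
    then show ?thesis using fsP unfolding fsupport_def by simp
  qed
  have intP: "integrable lborel \<Psi>" using integrable_Psi[OF sqP supp] .
  have contF: "isCont (fourier \<Psi>) t" for t using isCont_fourier[OF intP] .
  have vmF: "fourier \<Psi> z = (- \<i> * complex_of_real z) ^ v * \<theta> z" for z using vm unfolding vanishing_moments_def by simp
  define S0 where "S0 = (\<Sum>j\<in>{R1..<R2}. ((1 / 2) ^ (2 * v)) ^ (j - R1) :: real)"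
  define K where "K = (2 * pi * \<gamma>) ^ v * sqrt ((1 - 2 powr (2 * real v * (real R1 - real R2))) / (1 - 2 powr (- 2 * real v)))"
  have S0eq: "S0 = (1 - 2 powr (2 * real v * (real R1 - real R2))) / (1 - 2 powr (- 2 * real v))"
  proof -
    define q :: real where "q = (1 / 2) ^ (2 * v)"
    have "(1 / 2 :: real) ^ (2 * v) \<le> (1 / 2) ^ 1" using v1 by (intro power_decreasing) auto
    then have q1': "q < 1" unfolding q_def by simp
    then have q1: "q \<noteq> 1" "q < 1" by simp_all
    have "S0 = (\<Sum>i<R2 - R1. q ^ i)"
      unfolding S0_def q_def
      by (rule sum.reindex_bij_witness[where i="\<lambda>i. i + R1" and j="\<lambda>j. j - R1"]) auto
    also have "\<dots> = (1 - q ^ (R2 - R1)) / (1 - q)" using q1 by (simp add: geometric_sum divide_simps) (simp add: algebra_simps)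
    also have "q = 2 powr (- 2 * real v)"
      unfolding q_def by (simp add: powr_minus_divide powr_realpow[symmetric] powr_powr[symmetric] power_one_over)
    also have "(2 powr (- 2 * real v)) ^ (R2 - R1) = 2 powr (2 * real v * (real R1 - real R2))"
    proof -
      have "(2 powr (- 2 * real v)) ^ (R2 - R1) = (2 powr (- 2 * real v)) powr real (R2 - R1)"
        by (rule powr_realpow[symmetric]) simp
      also have "\<dots> = 2 powr (- 2 * real v * real (R2 - R1))" by (rule powr_powr)
      also have "- 2 * real v * real (R2 - R1) = 2 * real v * (real R1 - real R2)"
        using R12 by (simp add: of_nat_diff algebra_simps)
      finally show ?thesis .
    qed
    finally show ?thesis .
  qed
  have S0pos: "S0 > 0" unfolding S0_def using R12 by (intro sum_pos) auto
  have Kpos: "K > 0" unfolding K_def S0eq[symmetric] using \<gamma> S0pos by simp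
  have aeE: "AE z in lborel. ereal (cmod (\<theta> z)) \<le> Linf_norm \<theta>" unfolding Linf_norm_def by (rule esssup_AE)
  show ?thesis
  proof (cases "Linf_norm \<theta>")
    case PInf
    then show ?thesis using Kpos \<gamma> v1 R12 unfolding K_def by simp
  next
    case MInf
    then have "AE (z::real) in lborel. False" using aeE by simp
    then have "AE (z::real) in lborel. (1::real) \<le> 0" by (rule eventually_mono) simp
    then have "(1::real) \<le> 0" using AE_to_all[where F="\<lambda>_. 1" and g="\<lambda>_. 0" and z=0] by simp
    then show ?thesis by simp
  next
    case (real L)
    have aeL: "AE z in lborel. cmod (\<theta> z) \<le> L" using aeE real by simp
    have L0: "L \<ge> 0"
    proof -
      have "AE (z::real) in lborel. (0::real) \<le> L" using aeL by (rule eventually_mono) (auto intro: order_trans[OF norm_ge_zero])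
      then show ?thesis using AE_to_all[where F="\<lambda>_. 0" and g="\<lambda>_. L" and z=0] by simp
    qed
    have Fb: "cmod (fourier \<Psi> t) \<le> L * \<bar>t\<bar> ^ v" for t
    proof (rule AE_to_all[where F="\<lambda>t. cmod (fourier \<Psi> t)" and g="\<lambda>t. L * \<bar>t\<bar> ^ v"])
      show "isCont (\<lambda>t. cmod (fourier \<Psi> t)) z" for z using contF by (intro continuous_intros)
      show "isCont (\<lambda>t. L * \<bar>t\<bar> ^ v) z" for z by (intro continuous_intros)
      show "AE z in lborel. cmod (fourier \<Psi> z) \<le> L * \<bar>z\<bar> ^ v"
        using aeL
      proof (rule eventually_mono)
        fix z assume "cmod (\<theta> z) \<le> L"
        then have "\<bar>z\<bar> ^ v * cmod (\<theta> z) \<le> \<bar>z\<bar> ^ v * L" by (intro mult_left_mono) auto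
        then show "cmod (fourier \<Psi> z) \<le> L * \<bar>z\<bar> ^ v"
          unfolding vmF by (simp add: norm_mult norm_power ac_simps)
      qed
    qed
    define C where "C = {M1<..M2}"
    have ci: "\<exists>j k. wav_index c q = Inr (j, k) \<and> R1 \<le> j \<and> j < R2 \<and> - (int c - 1) \<le> k \<and> k \<le> 2 ^ j * int c - 1"
      if "q \<in> C" for q using col_info[OF wav a1 sub _ c_def] that unfolding C_def by blast
    define lev where "lev q = (case wav_index c q of Inl _ \<Rightarrow> 0 | Inr p \<Rightarrow> fst p)" for q
    define kk where "kk q = (case wav_index c q of Inl _ \<Rightarrow> 0 | Inr p \<Rightarrow> snd p)" for q
    have wiq: "wav_index c q = Inr (lev q, kk q)" and levk: "R1 \<le> lev q \<and> lev q < R2" "- (int c - 1) \<le> kk q \<and> kk q \<le> 2 ^ lev q * int c - 1"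
      if "q \<in> C" for q
      using ci[OF that] unfolding lev_def kk_def by auto
    have injC: "inj_on (\<lambda>q. (lev q, kk q)) C"
    proof (rule inj_onI)
      fix q q' assume q: "q \<in> C" "q' \<in> C" and eq: "(lev q, kk q) = (lev q', kk q')"
      have "wav_index c q = wav_index c q'" using wiq[OF q(1)] wiq[OF q(2)] eq by simp
      moreover have "q \<ge> 1" "q' \<ge> 1" using q unfolding C_def by auto
      ultimately show "q = q'" using wav_index_inj[OF ca(2)] by blast
    qed
    have Aeq: "Umat \<Phi> \<Psi> a \<omega> i q = complex_of_real (sqrt (1 / real m) * 2 powr (- real (lev q) / 2))
        * cis (- (2 * pi * real_of_int (kk q * four_index i) / real (m * 2 ^ lev q)))
        * fourier \<Psi> (2 * pi * real_of_int (four_index i) / real (m * 2 ^ lev q))" if "q \<in> C" for i q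
      using levk[OF that] by (intro Umat_entry[OF supp a1 c_def m0 om mc wiq[OF that]]) auto
    have Nb: "real N \<le> \<gamma> * real m * 2 ^ R1" using N unfolding m by simp
    define B where "B = L * (pi * \<gamma>) ^ v * sqrt S0"
    have each: "sqrt (\<Sum>i\<in>{1..N}. (cmod (\<Sum>j\<in>{M1<..M2}. Umat \<Phi> \<Psi> a \<omega> i j * x j))\<^sup>2) \<le> B"
      if x: "(\<Sum>j\<in>{M1<..M2}. (cmod (x j))\<^sup>2) \<le> 1" for x
    proof -
      have "(\<Sum>i\<in>{1..N}. (cmod (\<Sum>q\<in>C. Umat \<Phi> \<Psi> a \<omega> i q * x q))\<^sup>2) \<le> L\<^sup>2 * (pi * \<gamma>) ^ (2 * v) * S0"
        unfolding S0_def
        by (rule main_bound[where lev=lev and kk=kk and c=c and F="fourier \<Psi>"])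
           (use injC levk ca mc Aeq Fb L0 Nb \<gamma> x in \<open>auto simp: C_def\<close>)
      then have "sqrt (\<Sum>i\<in>{1..N}. (cmod (\<Sum>q\<in>C. Umat \<Phi> \<Psi> a \<omega> i q * x q))\<^sup>2) \<le> sqrt (L\<^sup>2 * (pi * \<gamma>) ^ (2 * v) * S0)"
        by (rule real_sqrt_le_mono)
      also have "sqrt (L\<^sup>2 * (pi * \<gamma>) ^ (2 * v) * S0) = B"
      proof -
        have p1: "((pi * \<gamma>) ^ v)\<^sup>2 = (pi * \<gamma>) ^ (2 * v)" by (simp add: power_mult[symmetric] mult.commute)
        have "(L * (pi * \<gamma>) ^ v)\<^sup>2 = L\<^sup>2 * ((pi * \<gamma>) ^ v)\<^sup>2" by (rule power_mult_distrib)
        then have "L\<^sup>2 * (pi * \<gamma>) ^ (2 * v) = (L * (pi * \<gamma>) ^ v)\<^sup>2" unfolding p1 by simp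
        moreover have "L * (pi * \<gamma>) ^ v \<ge> 0" using L0 \<gamma> by simp
        ultimately show ?thesis unfolding B_def by (simp add: real_sqrt_mult)
      qed
      finally show ?thesis unfolding C_def .
    qed
    have PB: "PUP_norm (Umat \<Phi> \<Psi> a \<omega>) N M1 M2 \<le> B"
      unfolding PUP_norm_def
    proof (rule cSup_least)
      show "(\<lambda>x. sqrt (\<Sum>i\<in>{1..N}. (cmod (\<Sum>j\<in>{M1<..M2}. Umat \<Phi> \<Psi> a \<omega> i j * x j))\<^sup>2)) `
          {x. (\<Sum>j\<in>{M1<..M2}. (cmod (x j))\<^sup>2) \<le> 1} \<noteq> {}"
      proof -
        have "(\<lambda>_. 0::complex) \<in> {x. (\<Sum>j\<in>{M1<..M2}. (cmod (x j))\<^sup>2) \<le> 1}" by simp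
        then have "{x. (\<Sum>j\<in>{M1<..M2}. (cmod (x j))\<^sup>2) \<le> 1} \<noteq> {}" by (metis empty_iff)
        then show ?thesis by (simp only: image_is_empty not_False_eq_True)
      qed
    qed (use each in auto)
    have BK: "B \<le> pi\<^sup>2 / 4 * L * K"
    proof -
      have pi4: "1 \<le> pi\<^sup>2 / 4"
      proof -
        have "2 * 2 \<le> pi * pi" using pi_gt3 by (intro mult_mono) auto
        then show ?thesis by (simp add: power2_eq_square)
      qed
      have "(pi * \<gamma>) ^ v \<le> (2 * pi * \<gamma>) ^ v" using \<gamma> by (intro power_mono) auto
      then have "L * (pi * \<gamma>) ^ v * sqrt S0 \<le> L * (2 * pi * \<gamma>) ^ v * sqrt S0"
        using L0 S0pos by (intro mult_right_mono mult_left_mono) auto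
      also have "\<dots> \<le> pi\<^sup>2 / 4 * (L * (2 * pi * \<gamma>) ^ v * sqrt S0)"
      proof -
        have Y0: "0 \<le> L * (2 * pi * \<gamma>) ^ v * sqrt S0" using L0 \<gamma> S0pos by simp
        have "1 * (L * (2 * pi * \<gamma>) ^ v * sqrt S0) \<le> pi\<^sup>2 / 4 * (L * (2 * pi * \<gamma>) ^ v * sqrt S0)"
          by (rule mult_right_mono[OF pi4 Y0])
        then show ?thesis by simp
      qed
      finally show ?thesis unfolding B_def K_def S0eq by (simp add: ac_simps)
    qed
    show ?thesis using PB BK real unfolding K_def by simp
  qed
qed

end
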